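(* Let $E^{II}_m(q;x,y)=\sum_{T\in\mathcal{T}^{II}_m}x^{l(T)}y^{u(T)}q^{\operatorname{inv}(T)}$ for $m\ge1$ and set $E^{II}_0(q;x,y)=x$. Then for all $n\ge1$, \[ E^{II}_{n+1}(q;x,y)=y\,E^{II}_n(q;x,y)+\sum_{k=0}^{n-2}q^{2(n-k-1)}{n-1\brack k}_q\,E^{II}_{k+1}(q;x,y)\,E^{II}_{n-k-1}(q;x,y). \]
   Context: An increasing binary tree on $[m]$ is a rooted tree on $\{1,\dots,m\}$ with labels increasing along paths from the root, each vertex having at most one (distinguished) left child and at most one right child. $\mathcal{T}^{II}_m$ is the set of André II trees on $[m]$: increasing binary trees in which, for every vertex with at least one child, the minimum label of the left subtree is greater than the minimum label of the right subtree (minimum of the empty tree $=+\infty$). $l(T)$ is the number of leaves, $u(T)$ the number of vertices with exactly one child. An inversion of $T$ is a pair $(i,j)$ of vertices with $i>j$ such that either (1) $j$ belongs to the right subtree of some vertex $v$ on the path from the root to $i$ whose left child is on that path; or (2) $j$ is on the path from the root to $i$ and the left child of $j$ is on that path; $\operatorname{inv}(T)$ counts inversions. ${n\brack k}_q=\frac{(q;q)_n}{(q;q)_k(q;q)_{n-k}}$, $(q;q)_n=\prod_{i=1}^n(1-q^i)$. *)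

theory Defs
  imports Main "HOL-Library.Tree" "HOL-Library.Extended_Nat"
    "HOL-Computational_Algebra.Polynomial"
begin

fun increasing :: "nat tree \<Rightarrow> bool" where
  "increasing Leaf = True"
| "increasing (Node l a r) =
     (increasing l \<and> increasing r \<and> (\<forall>x \<in> set_tree l \<union> set_tree r. a < x))"

definition inc_bin_trees :: "nat \<Rightarrow> nat tree set" where
  "inc_bin_trees m = {T. increasing T \<and> set_tree T = {1..m} \<and> size T = m}"

definition minlab :: "nat tree \<Rightarrow> enat" where
  "minlab t = (if t = Leaf then \<infinity> else enat (Min (set_tree t)))"

definition andre2 :: "nat tree \<Rightarrow> bool" where
  "andre2 T = (\<forall>l a r. Node l a r \<in> subtrees T \<longrightarrow> (l \<noteq> Leaf \<or> r \<noteq> Leaf)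
                 \<longrightarrow> minlab r < minlab l)"

definition andre_II_trees :: "nat \<Rightarrow> nat tree set" where
  "andre_II_trees m = {T \<in> inc_bin_trees m. andre2 T}"

fun leaves :: "nat tree \<Rightarrow> nat" where
  "leaves Leaf = 0"
| "leaves (Node l a r) = (if l = Leaf \<and> r = Leaf then 1 else 0) + leaves l + leaves r"

fun unary :: "nat tree \<Rightarrow> nat" where
  "unary Leaf = 0"
| "unary (Node l a r) = (if (l = Leaf) \<noteq> (r = Leaf) then 1 else 0) + unary l + unary r"

text \<open>Inversions (i,j), i > j: (1) there is a vertex v whose left subtree contains i
  (i.e. v is on the root-to-i path with its left child on that path) and whose right
  subtree contains j; or (2) j is on the root-to-i path with its left child on that
  path, i.e. i lies in the left subtree of j.\<close>
definition inversions :: "nat tree \<Rightarrow> (nat \<times> nat) set" where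
  "inversions T = {(i, j). j < i \<and>
      ((\<exists>l v r. Node l v r \<in> subtrees T \<and> i \<in> set_tree l \<and> j \<in> set_tree r) \<or>
       (\<exists>l r. Node l j r \<in> subtrees T \<and> i \<in> set_tree l))}"

definition inv :: "nat tree \<Rightarrow> nat" where
  "inv T = card (inversions T)"

definition qpoch :: "nat \<Rightarrow> 'a::field poly" where
  "qpoch n = (\<Prod>i=1..n. 1 - [:0, 1:] ^ i)"

definition qbinom :: "nat \<Rightarrow> nat \<Rightarrow> 'a::field poly" where
  "qbinom n k = qpoch n div (qpoch k * qpoch (n - k))"

text \<open>E^{II}_m(q;x,y) with q the polynomial variable; E_0 = x.\<close>
definition E2 :: "nat \<Rightarrow> 'a::field poly \<Rightarrow> 'a poly \<Rightarrow> 'a poly" where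
  "E2 m x y = (if m = 0 then x else
     (\<Sum>T\<in>andre_II_trees m. x ^ leaves T * y ^ unary T * [:0, 1:] ^ inv T))"

end

theory Submission
  imports Defs
begin


definition trees_on :: "nat set \<Rightarrow> nat tree set" where
  "trees_on S = {T. increasing T \<and> set_tree T = S \<and> size T = card S \<and> andre2 T}"

definition wt :: "'a::field poly \<Rightarrow> 'a poly \<Rightarrow> nat tree \<Rightarrow> 'a poly" where
  "wt x y T = x ^ leaves T * y ^ unary T * [:0, 1:] ^ inv T"

definition FF :: "nat set \<Rightarrow> 'a::field poly \<Rightarrow> 'a poly \<Rightarrow> 'a poly" where
  "FF S x y = (\<Sum>T\<in>trees_on S. wt x y T)"

lemma E2_FF: "m \<ge> 1 \<Longrightarrow> E2 m x y = FF {1..m} x y"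
  by (simp add: E2_def FF_def wt_def andre_II_trees_def inc_bin_trees_def trees_on_def)

lemma card_set_tree_le: "card (set_tree t) \<le> size t"
proof (induction t)
  case Leaf then show ?case by simp
next
  case (Node l a r)
  have "card (set_tree (Node l a r)) \<le> card (set_tree l \<union> set_tree r) + 1"
    by (simp add: card_insert_le_m1)
  also have "\<dots> \<le> card (set_tree l) + card (set_tree r) + 1"
    using card_Un_le by simp
  finally show ?case using Node by simp
qed

lemma finite_trees_bounded:
  assumes "finite A" shows "finite {T. set_tree T \<subseteq> A \<and> size T \<le> m}"
proof (induction m)
  case 0
  have "{T. set_tree T \<subseteq> A \<and> size T \<le> 0} = {Leaf}" by auto
  then show ?case by simp
next
  case (Suc m)
  let ?B = "{T. set_tree T \<subseteq> A \<and> size T \<le> m}"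
  have "{T. set_tree T \<subseteq> A \<and> size T \<le> Suc m} \<subseteq>
        insert Leaf ((\<lambda>(l, a, r). Node l a r) ` (?B \<times> A \<times> ?B))"
  proof
    fix T assume T: "T \<in> {T. set_tree T \<subseteq> A \<and> size T \<le> Suc m}"
    show "T \<in> insert Leaf ((\<lambda>(l, a, r). Node l a r) ` (?B \<times> A \<times> ?B))"
    proof (cases T)
      case Leaf then show ?thesis by simp
    next
      case (Node l a r)
      then have "(l, a, r) \<in> ?B \<times> A \<times> ?B" using T by auto
      then show ?thesis unfolding Node by force
    qed
  qed
  moreover have "finite (insert Leaf ((\<lambda>(l, a, r). Node l a r) ` (?B \<times> A \<times> ?B)))"
    using Suc assms by simp
  ultimately show ?case by (rule finite_subset)
qed

lemma finite_trees_on: "finite S \<Longrightarrow> finite (trees_on S)"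
  by (rule finite_subset[OF _ finite_trees_bounded[of S "card S"]]) (auto simp: trees_on_def)

lemma trees_on_empty: "trees_on {} = {Leaf}"
  by (auto simp: trees_on_def andre2_def)

lemma trees_on_nonempty: "T \<in> trees_on S \<Longrightarrow> S \<noteq> {} \<Longrightarrow> T \<noteq> Leaf"
  by (auto simp: trees_on_def)

lemma min_increasing: "increasing (Node l a r) \<Longrightarrow> a = Min (set_tree (Node l a r))"
  by (auto intro!: Min_eqI[symmetric] simp: less_imp_le)

lemma minlab_trees_on: "T \<in> trees_on S \<Longrightarrow> S \<noteq> {} \<Longrightarrow> minlab T = enat (Min S)"
  by (auto simp: minlab_def trees_on_def)

lemma andre2_Node: "andre2 (Node l a r) \<longleftrightarrow> andre2 l \<and> andre2 r \<and>
   ((l \<noteq> Leaf \<or> r \<noteq> Leaf) \<longrightarrow> minlab r < minlab l)"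
  unfolding andre2_def by auto

lemma increasing_Node: "increasing (Node l a r) \<longleftrightarrow> increasing l \<and> increasing r \<and>
   (\<forall>x \<in> set_tree l \<union> set_tree r. a < x)" by simp

lemma trees_on_decomp:
  assumes "finite S" "S \<noteq> {}"
  shows "trees_on S = (\<lambda>(l,r). Node l (Min S) r) ` {(l,r). \<exists>A \<subseteq> S - {Min S}.
      l \<in> trees_on A \<and> r \<in> trees_on (S - {Min S} - A) \<and>
      ((l \<noteq> Leaf \<or> r \<noteq> Leaf) \<longrightarrow> minlab r < minlab l)}"
proof (intro equalityI subsetI)
  fix T assume T: "T \<in> trees_on S"
  then obtain l a r where Tn: "T = Node l a r" using trees_on_nonempty assms by (cases T) auto
  let ?L = "set_tree l" and ?R = "set_tree r"
  have inc: "increasing l" "increasing r" "\<forall>x \<in> ?L \<union> ?R. a < x"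
    using T Tn by (auto simp: trees_on_def)
  have S: "S = insert a (?L \<union> ?R)" using T Tn by (auto simp: trees_on_def)
  have aS: "a = Min S" using min_increasing[of l a r] T Tn by (auto simp: trees_on_def)
  have anot: "a \<notin> ?L \<union> ?R" using inc by auto
  have sz: "size l + size r + 1 = card S" using T Tn by (auto simp: trees_on_def)
  have cS: "card S = card (?L \<union> ?R) + 1" using S anot by simp
  have c1: "card ?L \<le> size l" "card ?R \<le> size r" by (rule card_set_tree_le)+
  have c2: "card (?L \<union> ?R) + card (?L \<inter> ?R) = card ?L + card ?R"
    using card_Un_Int[of ?L ?R] by simp
  have eqs: "card ?L = size l" "card ?R = size r" "card (?L \<inter> ?R) = 0"
    using sz cS c1 c2 by linarith+
  have disj: "?L \<inter> ?R = {}" using eqs(3) by simp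
  have a2: "andre2 l" "andre2 r" "(l \<noteq> Leaf \<or> r \<noteq> Leaf) \<longrightarrow> minlab r < minlab l"
    using T Tn by (auto simp: trees_on_def andre2_Node)
  have h1: "?L \<subseteq> S - {Min S}" using S aS anot by auto
  have h2: "l \<in> trees_on ?L" using inc eqs a2 by (auto simp: trees_on_def)
  have h3: "S - {Min S} - ?L = ?R" using S aS anot disj by auto
  have h4: "r \<in> trees_on ?R" using inc eqs a2 by (auto simp: trees_on_def)
  have "(l, r) \<in> {(l,r). \<exists>A \<subseteq> S - {Min S}.
      l \<in> trees_on A \<and> r \<in> trees_on (S - {Min S} - A) \<and>
      ((l \<noteq> Leaf \<or> r \<noteq> Leaf) \<longrightarrow> minlab r < minlab l)}"
    apply (simp only: mem_Collect_eq case_prod_conv)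
    apply (rule exI[of _ ?L])
    using h1 h2 h3 h4 a2(3) by simp
  then show "T \<in> (\<lambda>(l,r). Node l (Min S) r) ` {(l,r). \<exists>A \<subseteq> S - {Min S}.
      l \<in> trees_on A \<and> r \<in> trees_on (S - {Min S} - A) \<and>
      ((l \<noteq> Leaf \<or> r \<noteq> Leaf) \<longrightarrow> minlab r < minlab l)}"
    unfolding Tn aS by (rule image_eqI[rotated]) simp
next
  fix T assume "T \<in> (\<lambda>(l,r). Node l (Min S) r) ` {(l,r). \<exists>A \<subseteq> S - {Min S}.
      l \<in> trees_on A \<and> r \<in> trees_on (S - {Min S} - A) \<and>
      ((l \<noteq> Leaf \<or> r \<noteq> Leaf) \<longrightarrow> minlab r < minlab l)}"
  then obtain l r A where Tn: "T = Node l (Min S) r" and A: "A \<subseteq> S - {Min S}"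
    and l: "l \<in> trees_on A" and r: "r \<in> trees_on (S - {Min S} - A)"
    and c: "(l \<noteq> Leaf \<or> r \<noteq> Leaf) \<longrightarrow> minlab r < minlab l" by auto
  have fin: "finite A" using A assms(1) finite_subset by blast
  have mS: "Min S \<in> S" using assms by simp
  have lt: "\<forall>x \<in> S - {Min S}. Min S < x" using assms
    by (metis DiffE Min_le order.not_eq_order_implies_strict singletonI)
  have "increasing T" using l r A lt Tn by (auto simp: trees_on_def)
  moreover have "set_tree T = S" using l r A mS Tn by (auto simp: trees_on_def)
  moreover have "size T = card S"
  proof -
    have "card S = card (S - {Min S}) + 1" using mS assms(1)
      by (metis card_Suc_Diff1 Suc_eq_plus1)
    moreover have "card (S - {Min S}) = card A + card (S - {Min S} - A)"
      using A assms(1) fin by (simp add: card_Diff_subset card_mono)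
    ultimately show ?thesis using l r Tn by (simp add: trees_on_def)
  qed
  moreover have "andre2 T" using l r c Tn by (simp add: trees_on_def andre2_Node)
  ultimately show "T \<in> trees_on S" by (simp add: trees_on_def)
qed

lemma inversions_Leaf[simp]: "inversions Leaf = {}"
  by (simp add: inversions_def)

lemma inversions_Node: "inversions (Node l a r) = inversions l \<union> inversions r \<union>
   {(i, j). j < i \<and> i \<in> set_tree l \<and> j \<in> set_tree r} \<union> {(i, j). j = a \<and> a < i \<and> i \<in> set_tree l}"
  unfolding inversions_def by auto

lemma inversions_subset: "inversions t \<subseteq> set_tree t \<times> set_tree t"
  by (induction t) (auto simp: inversions_Node)

lemma finite_inversions: "finite (inversions t)"
  by (rule finite_subset[OF inversions_subset]) simp

lemma leaves_map[simp]: "leaves (map_tree f t) = leaves t"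
  by (induction t) auto

lemma unary_map[simp]: "unary (map_tree f t) = unary t"
  by (induction t) auto

lemma subtrees_map: "subtrees (map_tree f t) = map_tree f ` subtrees t"
  by (induction t) auto

lemma increasing_map:
  assumes "strict_mono_on S f" "set_tree t \<subseteq> S"
  shows "increasing (map_tree f t) = increasing t"
  using assms(2)
proof (induction t)
  case Leaf then show ?case by simp
next
  case (Node l a r)
  have lt: "\<And>x y. x \<in> S \<Longrightarrow> y \<in> S \<Longrightarrow> f x < f y \<longleftrightarrow> x < y"
    using strict_mono_on_less[OF assms(1)] by blast
  have "(\<forall>x \<in> f ` set_tree l \<union> f ` set_tree r. f a < x) = (\<forall>x \<in> set_tree l \<union> set_tree r. a < x)"
  proof -
    have "\<forall>x \<in> set_tree l \<union> set_tree r. (f a < f x) = (a < x)"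
      using Node.prems lt by auto
    then show ?thesis by auto
  qed
  then show ?case using Node by (simp add: tree.set_map)
qed

lemma Min_map:
  assumes "strict_mono_on S f" "A \<subseteq> S" "finite A" "A \<noteq> {}"
  shows "Min (f ` A) = f (Min A)"
proof (rule Min_eqI)
  show "finite (f ` A)" using assms by simp
  show "f (Min A) \<in> f ` A" using assms by simp
  fix y assume "y \<in> f ` A"
  then obtain z where z: "z \<in> A" "y = f z" by auto
  have "Min A \<le> z" using z assms by simp
  then show "f (Min A) \<le> y" using z assms strict_mono_on_less_eq[OF assms(1)]
    by (metis Min_in subsetD)
qed

lemma minlab_map:
  assumes "strict_mono_on S f" "set_tree t \<subseteq> S"
  shows "minlab (map_tree f t) = (if t = Leaf then \<infinity> else enat (f (Min (set_tree t))))"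
  using assms Min_map[OF assms(1) assms(2)] by (simp add: minlab_def tree.set_map)

lemma minlab_map_less:
  assumes "strict_mono_on S f" "set_tree t \<subseteq> S" "set_tree u \<subseteq> S"
  shows "minlab (map_tree f t) < minlab (map_tree f u) \<longleftrightarrow> minlab t < minlab u"
proof -
  have "t \<noteq> Leaf \<Longrightarrow> Min (set_tree t) \<in> S" using assms(2) by (meson Min_in eq_set_tree_empty finite_set_tree subsetD)
  moreover have "u \<noteq> Leaf \<Longrightarrow> Min (set_tree u) \<in> S" using assms(3) by (meson Min_in eq_set_tree_empty finite_set_tree subsetD)
  ultimately show ?thesis
    using minlab_map[OF assms(1,2)] minlab_map[OF assms(1,3)] strict_mono_on_less[OF assms(1)]
    by (auto simp: minlab_def)
qed

lemma andre2_map: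
  assumes "strict_mono_on S f" "set_tree t \<subseteq> S"
  shows "andre2 (map_tree f t) = andre2 t"
  using assms(2)
proof (induction t)
  case Leaf then show ?case by (simp add: andre2_def)
next
  case (Node l a r)
  then show ?case using minlab_map_less[OF assms(1), of r l] by (simp add: andre2_Node)
qed

lemma inversions_map:
  assumes "strict_mono_on S f" "set_tree t \<subseteq> S"
  shows "inversions (map_tree f t) = (\<lambda>(i, j). (f i, f j)) ` inversions t"
  using assms(2)
proof (induction t)
  case Leaf then show ?case by simp
next
  case (Node l a r)
  have lt: "\<And>x y. x \<in> S \<Longrightarrow> y \<in> S \<Longrightarrow> f x < f y \<longleftrightarrow> x < y"
    using strict_mono_on_less[OF assms(1)] by blast
  have aS: "a \<in> S" and lS: "set_tree l \<subseteq> S" and rS: "set_tree r \<subseteq> S" using Node.prems by auto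
  have e1: "{(i, j). j < i \<and> i \<in> f ` set_tree l \<and> j \<in> f ` set_tree r} =
     (\<lambda>(i, j). (f i, f j)) ` {(i, j). j < i \<and> i \<in> set_tree l \<and> j \<in> set_tree r}"
  proof (intro equalityI subsetI)
    fix p assume "p \<in> {(i, j). j < i \<and> i \<in> f ` set_tree l \<and> j \<in> f ` set_tree r}"
    then obtain i j where p: "p = (f i, f j)" "i \<in> set_tree l" "j \<in> set_tree r" "f j < f i" by auto
    then have "j < i" using lt lS rS by blast
    then show "p \<in> (\<lambda>(i, j). (f i, f j)) ` {(i, j). j < i \<and> i \<in> set_tree l \<and> j \<in> set_tree r}"
      using p by force
  next
    fix p assume "p \<in> (\<lambda>(i, j). (f i, f j)) ` {(i, j). j < i \<and> i \<in> set_tree l \<and> j \<in> set_tree r}"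
    then obtain i j where p: "p = (f i, f j)" "i \<in> set_tree l" "j \<in> set_tree r" "j < i" by auto
    then have "f j < f i" using lt lS rS by blast
    then show "p \<in> {(i, j). j < i \<and> i \<in> f ` set_tree l \<and> j \<in> f ` set_tree r}" using p by auto
  qed
  have e2: "{(i, j). j = f a \<and> f a < i \<and> i \<in> f ` set_tree l} =
     (\<lambda>(i, j). (f i, f j)) ` {(i, j). j = a \<and> a < i \<and> i \<in> set_tree l}"
  proof (intro equalityI subsetI)
    fix p assume "p \<in> {(i, j). j = f a \<and> f a < i \<and> i \<in> f ` set_tree l}"
    then obtain i where p: "p = (f i, f a)" "i \<in> set_tree l" "f a < f i" by auto
    then have "a < i" using lt lS aS by blast
    then show "p \<in> (\<lambda>(i, j). (f i, f j)) ` {(i, j). j = a \<and> a < i \<and> i \<in> set_tree l}"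
      using p by force
  next
    fix p assume "p \<in> (\<lambda>(i, j). (f i, f j)) ` {(i, j). j = a \<and> a < i \<and> i \<in> set_tree l}"
    then obtain i where p: "p = (f i, f a)" "i \<in> set_tree l" "a < i" by auto
    then have "f a < f i" using lt lS aS by blast
    then show "p \<in> {(i, j). j = f a \<and> f a < i \<and> i \<in> f ` set_tree l}" using p by auto
  qed
  show ?case using Node lS rS
    by (simp only: tree.map inversions_Node tree.set_map e1 e2 image_Un)
qed

lemma inv_map:
  assumes "strict_mono_on S f" "set_tree t \<subseteq> S"
  shows "inv (map_tree f t) = inv t"
proof -
  have "inj_on (\<lambda>(i, j). (f i, f j)) (inversions t)"
  proof (rule inj_onI)
    fix p q assume pq: "p \<in> inversions t" "q \<in> inversions t" "(\<lambda>(i, j). (f i, f j)) p = (\<lambda>(i, j). (f i, f j)) q"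
    obtain i j i' j' where pp: "p = (i, j)" "q = (i', j')" by (cases p, cases q) auto
    have "i \<in> S" "j \<in> S" "i' \<in> S" "j' \<in> S"
      using inversions_subset[of t] assms(2) pq(1,2) unfolding pp by blast+
    then show "p = q" using pq(3) strict_mono_on_eq[OF assms(1)] unfolding pp
      by auto
  qed
  then show ?thesis using inversions_map[OF assms] by (simp add: inv_def card_image)
qed

lemma trees_on_map:
  assumes "strict_mono_on S f" "T \<in> trees_on S" "finite S"
  shows "map_tree f T \<in> trees_on (f ` S)"
proof -
  have sub: "set_tree T \<subseteq> S" using assms(2) by (simp add: trees_on_def)
  have inj: "inj_on f S" using assms(1) by (rule strict_mono_on_imp_inj_on)
  show ?thesis using assms(2) increasing_map[OF assms(1) sub] andre2_map[OF assms(1) sub]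
    by (simp add: trees_on_def tree.set_map card_image[OF inj])
qed

lemma FF_map:
  assumes "strict_mono_on S f" "finite S"
  shows "FF (f ` S) x y = FF S x y"
proof -
  define g where "g = inv_into S f"
  have inj: "inj_on f S" using assms(1) by (rule strict_mono_on_imp_inj_on)
  have gf: "\<And>s. s \<in> S \<Longrightarrow> g (f s) = s" using inj by (simp add: g_def)
  have fg: "\<And>s. s \<in> f ` S \<Longrightarrow> f (g s) = s" by (simp add: g_def f_inv_into_f)
  have gS: "g ` f ` S = S" using gf by force
  have smg: "strict_mono_on (f ` S) g"
  proof (rule strict_mono_onI)
    fix r s assume rs: "r \<in> f ` S" "s \<in> f ` S" "r < s"
    then obtain r' s' where "r = f r'" "s = f s'" "r' \<in> S" "s' \<in> S" by auto
    then show "g r < g s" using rs gf strict_mono_on_less[OF assms(1)] by auto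
  qed
  have "FF S x y = (\<Sum>T\<in>trees_on S. wt x y T)" by (simp add: FF_def)
  also have "\<dots> = (\<Sum>T\<in>trees_on (f ` S). wt x y T)"
  proof (rule sum.reindex_bij_witness[of _ "map_tree g" "map_tree f"])
    fix T assume T: "T \<in> trees_on S"
    then have sub: "set_tree T \<subseteq> S" by (simp add: trees_on_def)
    show "map_tree g (map_tree f T) = T"
      using sub gf by (simp add: tree.map_comp tree.map_ident_strong subsetD)
    show "map_tree f T \<in> trees_on (f ` S)" using trees_on_map[OF assms(1) T assms(2)] .
    show "wt x y (map_tree f T) = wt x y T"
      using inv_map[OF assms(1) sub] by (simp add: wt_def)
  next
    fix T assume T: "T \<in> trees_on (f ` S)"
    then have sub: "set_tree T \<subseteq> f ` S" by (simp add: trees_on_def)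
    show "map_tree f (map_tree g T) = T"
      using sub fg by (simp add: tree.map_comp tree.map_ident_strong subsetD)
    show "map_tree g T \<in> trees_on S" using trees_on_map[OF smg T] gS assms(2) by simp
  qed
  finally show ?thesis by (simp add: FF_def)
qed

lemma enum_exists:
  fixes S :: "nat set"
  assumes "finite S"
  shows "\<exists>f. strict_mono_on {1..card S} f \<and> f ` {1..card S} = S"
proof -
  obtain xs where xs: "sorted_wrt (<) xs" "set xs = S"
    using ex1_sorted_list_for_set_if_finite[OF assms] by blast
  have len: "length xs = card S" using xs
    by (metis distinct_card strict_sorted_iff)
  define f where "f i = xs ! (i - 1)" for i
  have "strict_mono_on {1..card S} f"
  proof (rule strict_mono_onI)
    fix r s assume rs: "r \<in> {1..card S}" "s \<in> {1..card S}" "r < s"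
    then have "r - 1 < s - 1" "s - 1 < length xs" using len by auto
    then show "f r < f s" unfolding f_def using sorted_wrt_nth_less[OF xs(1)] by blast
  qed
  moreover have "f ` {1..card S} = S"
  proof -
    have "f ` {1..card S} = (\<lambda>i. xs ! i) ` {0..<card S}"
    proof (intro equalityI subsetI)
      fix z assume "z \<in> f ` {1..card S}"
      then obtain i where "i \<in> {1..card S}" "z = xs ! (i - 1)" by (auto simp: f_def)
      then show "z \<in> (\<lambda>i. xs ! i) ` {0..<card S}" by force
    next
      fix z assume "z \<in> (\<lambda>i. xs ! i) ` {0..<card S}"
      then obtain i where "i < card S" "z = xs ! i" by auto
      then show "z \<in> f ` {1..card S}" by (intro image_eqI[of _ _ "Suc i"]) (auto simp: f_def)
    qed
    also have "\<dots> = set xs" using len by (auto simp: in_set_conv_nth)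
    finally show ?thesis using xs by simp
  qed
  ultimately show ?thesis by blast
qed

lemma FF_card:
  fixes S :: "nat set"
  assumes "finite S" "S \<noteq> {}"
  shows "FF S x y = E2 (card S) x y"
proof -
  obtain f where f: "strict_mono_on {1..card S} f" "f ` {1..card S} = S"
    using enum_exists[OF assms(1)] by blast
  have "card S \<ge> 1" using assms by (simp add: Suc_leI card_gt_0_iff)
  then show ?thesis using FF_map[OF f(1), of x y] f(2) E2_FF[of "card S" x y] by simp
qed



definition cross :: "nat set \<Rightarrow> nat set \<Rightarrow> nat" where
  "cross A B = card {(i, j). i \<in> A \<and> j \<in> B \<and> j < i}"

definition GG :: "nat set \<Rightarrow> nat \<Rightarrow> 'a::field poly" where
  "GG C j = (\<Sum>A\<in>{A. A \<subseteq> C \<and> card A = j}. [:0, 1:] ^ cross A (C - A))"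

lemma qpoch_0[simp]: "qpoch 0 = 1" by (simp add: qpoch_def)

lemma qpoch_Suc: "qpoch (Suc m) = qpoch m * (1 - [:0, 1:] ^ Suc m)"
  by (simp add: qpoch_def prod.cl_ivl_Suc)

lemma qpoch_nonzero: "(qpoch m :: 'a::field poly) \<noteq> 0"
proof (induction m)
  case 0 then show ?case by simp
next
  case (Suc m)
  have "poly (1 - [:0, 1:] ^ Suc m :: 'a poly) 0 = 1" by simp
  then have "(1 - [:0, 1:] ^ Suc m :: 'a poly) \<noteq> 0" by (metis poly_0 zero_neq_one)
  then show ?case using Suc by (simp add: qpoch_Suc)
qed

lemma cross_empty1[simp]: "cross {} B = 0" by (simp add: cross_def)
lemma cross_empty2[simp]: "cross A {} = 0" by (simp add: cross_def)

lemma GG_0: "finite C \<Longrightarrow> GG C 0 = 1"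
proof -
  assume "finite C"
  then have "{A. A \<subseteq> C \<and> card A = 0} = {{}}" by (auto dest: finite_subset)
  then show ?thesis by (simp add: GG_def)
qed

lemma GG_top: "finite C \<Longrightarrow> GG C (card C) = 1"
proof -
  assume f: "finite C"
  then have "{A. A \<subseteq> C \<and> card A = card C} = {C}" by (auto dest: card_subset_eq)
  then show ?thesis by (simp add: GG_def)
qed

lemma cross_notmax:
  assumes "A \<subseteq> C'" "\<forall>i\<in>C'. i < c"
  shows "cross A (insert c (C' - A)) = cross A (C' - A)"
proof -
  have "\<forall>i\<in>A. \<not> c < i" using assms by fastforce
  then have "{(i, j). i \<in> A \<and> j \<in> insert c (C' - A) \<and> j < i} = {(i, j). i \<in> A \<and> j \<in> C' - A \<and> j < i}"
    by auto
  then show ?thesis by (simp add: cross_def)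
qed

lemma cross_max:
  assumes "A \<subseteq> C'" "\<forall>i\<in>C'. i < c" "finite C'"
  shows "cross (insert c A) (C' - A) = cross A (C' - A) + card (C' - A)"
proof -
  have cA: "c \<notin> A" using assms by auto
  have e: "{(i, j). i \<in> insert c A \<and> j \<in> C' - A \<and> j < i} =
    {(i, j). i \<in> A \<and> j \<in> C' - A \<and> j < i} \<union> Pair c ` (C' - A)"
    using assms by auto
  have fA: "finite A" using assms finite_subset by blast
  have "finite {(i, j). i \<in> A \<and> j \<in> C' - A \<and> j < i}"
    by (rule finite_subset[of _ "A \<times> C'"]) (use assms fA in auto)
  moreover have "{(i, j). i \<in> A \<and> j \<in> C' - A \<and> j < i} \<inter> Pair c ` (C' - A) = {}" using cA by auto
  ultimately have "card ({(i, j). i \<in> A \<and> j \<in> C' - A \<and> j < i} \<union> Pair c ` (C' - A)) =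
     card {(i, j). i \<in> A \<and> j \<in> C' - A \<and> j < i} + card (Pair c ` (C' - A))"
    using assms by (simp add: card_Un_disjoint)
  also have "card (Pair c ` (C' - A)) = card (C' - A)" by (simp add: card_image inj_on_def)
  finally show ?thesis using e by (simp add: cross_def)
qed

lemma GG_rec:
  assumes "finite C" "C \<noteq> {}" "j \<ge> 1"
  shows "(GG C j :: 'a::field poly) = GG (C - {Max C}) j + [:0, 1:] ^ (card C - j) * GG (C - {Max C}) (j - 1)"
proof -
  define c where "c = Max C"
  define C' where "C' = C - {c}"
  have cC: "c \<in> C" using assms by (simp add: c_def)
  have lt: "\<forall>i\<in>C'. i < c" using assms by (auto simp: C'_def c_def order.not_eq_order_implies_strict)
  have fC': "finite C'" using assms by (simp add: C'_def)
  have CC: "C = insert c C'" using cC by (auto simp: C'_def)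
  have cC': "c \<notin> C'" by (simp add: C'_def)
  have split: "{A. A \<subseteq> C \<and> card A = j} = {A. A \<subseteq> C' \<and> card A = j} \<union> insert c ` {A. A \<subseteq> C' \<and> card A = j - 1}"
  proof (intro equalityI subsetI)
    fix A assume A: "A \<in> {A. A \<subseteq> C \<and> card A = j}"
    show "A \<in> {A. A \<subseteq> C' \<and> card A = j} \<union> insert c ` {A. A \<subseteq> C' \<and> card A = j - 1}"
    proof (cases "c \<in> A")
      case True
      have "A - {c} \<subseteq> C'" using A CC by auto
      moreover have "card (A - {c}) = j - 1" using A True by simp
      moreover have "A = insert c (A - {c})" using True by auto
      ultimately show ?thesis by blast
    next
      case False
      then show ?thesis using A CC by auto
    qed
  next
    fix A assume A: "A \<in> {A. A \<subseteq> C' \<and> card A = j} \<union> insert c ` {A. A \<subseteq> C' \<and> card A = j - 1}"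
    then show "A \<in> {A. A \<subseteq> C \<and> card A = j}"
    proof
      assume "A \<in> {A. A \<subseteq> C' \<and> card A = j}" then show ?thesis using CC by auto
    next
      assume "A \<in> insert c ` {A. A \<subseteq> C' \<and> card A = j - 1}"
      then obtain B where B: "B \<subseteq> C'" "card B = j - 1" "A = insert c B" by auto
      have "c \<notin> B" using B cC' by auto
      moreover have "finite B" using B fC' finite_subset by blast
      ultimately have "card A = j" using B assms(3) by simp
      then show ?thesis using B CC by auto
    qed
  qed
  have fin1: "finite {A. A \<subseteq> C' \<and> card A = j}" using fC' by simp
  have fin2: "finite (insert c ` {A. A \<subseteq> C' \<and> card A = j - 1})" using fC' by simp
  have disj: "{A. A \<subseteq> C' \<and> card A = j} \<inter> insert c ` {A. A \<subseteq> C' \<and> card A = j - 1} = {}"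
    using cC' by auto
  have inj: "inj_on (insert c) {A. A \<subseteq> C' \<and> card A = j - 1}"
    proof (rule inj_onI)
    fix A B assume AB: "A \<in> {A. A \<subseteq> C' \<and> card A = j - 1}" "B \<in> {A. A \<subseteq> C' \<and> card A = j - 1}"
      "insert c A = insert c B"
    then have "c \<notin> A" "c \<notin> B" using cC' by auto
    then show "A = B" using AB(3) by (metis Diff_insert_absorb)
  qed
  have "(GG C j :: 'a poly) = (\<Sum>A\<in>{A. A \<subseteq> C' \<and> card A = j}. [:0, 1:] ^ cross A (C - A)) +
      (\<Sum>A\<in>insert c ` {A. A \<subseteq> C' \<and> card A = j - 1}. [:0, 1:] ^ cross A (C - A))"
    unfolding GG_def split by (rule sum.union_disjoint[OF fin1 fin2 disj])
  also have "(\<Sum>A\<in>{A. A \<subseteq> C' \<and> card A = j}. [:0, 1:] ^ cross A (C - A)) = (GG C' j :: 'a poly)"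
    unfolding GG_def
  proof (rule sum.cong[OF refl])
    fix A assume A: "A \<in> {A. A \<subseteq> C' \<and> card A = j}"
    then have "C - A = insert c (C' - A)" using CC cC' by auto
    then show "[:0, 1:] ^ cross A (C - A) = ([:0, 1:] ^ cross A (C' - A) :: 'a poly)"
      using cross_notmax[of A C' c] A lt by simp
  qed
  also have "(\<Sum>A\<in>insert c ` {A. A \<subseteq> C' \<and> card A = j - 1}. [:0, 1:] ^ cross A (C - A)) =
      (\<Sum>A\<in>{A. A \<subseteq> C' \<and> card A = j - 1}. [:0, 1:] ^ cross (insert c A) (C - insert c A))"
    by (rule sum.reindex[OF inj, unfolded comp_def])
  also have "\<dots> = [:0, 1:] ^ (card C - j) * (GG C' (j - 1) :: 'a poly)"
    unfolding GG_def sum_distrib_left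
  proof (rule sum.cong[OF refl])
    fix A assume A: "A \<in> {A. A \<subseteq> C' \<and> card A = j - 1}"
    have e: "C - insert c A = C' - A" using CC cC' by auto
    have fA: "finite A" using A fC' finite_subset by blast
    have "card (C' - A) = card C' - (j - 1)" using A fA by (simp add: card_Diff_subset)
    also have "\<dots> = card C - j" using CC cC' fC' assms(3) by simp
    finally have "card (C' - A) = card C - j" .
    then show "[:0, 1:] ^ cross (insert c A) (C - insert c A) =
        ([:0, 1:] ^ (card C - j) * [:0, 1:] ^ cross A (C' - A) :: 'a poly)"
      using cross_max[of A C' c] A lt fC' e by (simp add: power_add)
  qed
  finally show ?thesis by (simp add: C'_def c_def)
qed

lemma alg:
  fixes g :: "'a::comm_ring_1"
  assumes "g = g1 + p * g2" "qj = qj' * (1 - t)" "qr = qmj * (1 - p)"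
    "g1 * qj * qmj = qM" "g2 * qj' * qr = qM" "p * t = pN"
  shows "g * qj * qr = qM * (1 - pN)"
proof -
  have "g * qj * qr = (g1 * qj * qmj) * (1 - p) + p * (g2 * qj' * qr) * (1 - t)"
    unfolding assms(1,2,3) by (simp add: algebra_simps)
  also have "\<dots> = qM * (1 - pN)" unfolding assms(4,5) assms(6)[symmetric] by (simp add: algebra_simps)
  finally show ?thesis .
qed

lemma GG_prod:
  "finite C \<Longrightarrow> j \<le> card C \<Longrightarrow>
     (GG C j :: 'a::field poly) * qpoch j * qpoch (card C - j) = qpoch (card C)"
proof (induction "card C" arbitrary: C j)
  case 0
  then show ?case by (simp add: GG_0)
next
  case (Suc M)
  show ?case
  proof (cases "j = 0 \<or> j = card C")
    case True
    then show ?thesis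
    proof
      assume "j = 0" then show ?thesis using GG_0[OF Suc.prems(1), where 'a='a] by simp
    next
      assume "j = card C" then show ?thesis using GG_top[OF Suc.prems(1), where 'a='a] by simp
    qed
  next
    case False
    then have j: "1 \<le> j" "j \<le> M" using Suc.prems Suc.hyps(2) by auto
    have ne: "C \<noteq> {}" using Suc.hyps(2) by auto
    define C' where "C' = C - {Max C}"
    have fC': "finite C'" using Suc.prems by (simp add: C'_def)
    have cC': "card C' = M" using Suc.prems Suc.hyps(2) ne by (simp add: C'_def)
    have IH1: "(GG C' j :: 'a poly) * qpoch j * qpoch (M - j) = qpoch M"
      using Suc.hyps(1)[of C' j] fC' cC' j by simp
    have IH2: "(GG C' (j - 1) :: 'a poly) * qpoch (j - 1) * qpoch (M - (j - 1)) = qpoch M"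
      using Suc.hyps(1)[of C' "j - 1"] fC' cC' j by simp
    have rec: "(GG C j :: 'a poly) = GG C' j + [:0, 1:] ^ (Suc M - j) * GG C' (j - 1)"
      using GG_rec[OF Suc.prems(1) ne j(1)] Suc.hyps(2) by (simp add: C'_def)
    have e1: "Suc M - j = Suc (M - j)" using j by simp
    have e2: "M - (j - 1) = Suc M - j" using j by simp
    obtain i where i: "j = Suc i" using j by (cases j) auto
    have qj: "qpoch j = (qpoch (j - 1) :: 'a poly) * (1 - [:0, 1:] ^ j)" using i by (simp add: qpoch_Suc)
    have qr: "qpoch (Suc M - j) = (qpoch (M - j) :: 'a poly) * (1 - [:0, 1:] ^ (Suc M - j))"
      unfolding e1 by (simp add: qpoch_Suc)
    have pw: "([:0, 1:] :: 'a poly) ^ (Suc M - j) * [:0, 1:] ^ j = [:0, 1:] ^ Suc M"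
      using j by (simp add: power_add[symmetric])
    have "(GG C j :: 'a poly) * qpoch j * qpoch (Suc M - j) = qpoch M * (1 - [:0, 1:] ^ Suc M)"
      by (rule alg[OF rec qj qr IH1 IH2[unfolded e2] pw])
    then have "(GG C j :: 'a poly) * qpoch j * qpoch (card C - j) = qpoch (Suc M)"
      unfolding Suc.hyps(2)[symmetric] by (simp add: qpoch_Suc)
    then show ?thesis unfolding Suc.hyps(2)[symmetric] .
  qed
qed

lemma qbinom_GG:
  assumes "finite C" "j \<le> card C"
  shows "qbinom (card C) j = GG C j"
proof -
  have "qpoch (card C) = GG C j * (qpoch j * qpoch (card C - j))"
    by (metis GG_prod[OF assms] mult.assoc)
  moreover have "(qpoch j * qpoch (card C - j) :: 'a poly) \<noteq> 0" by (simp add: qpoch_nonzero)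
  ultimately show ?thesis unfolding qbinom_def by (metis nonzero_mult_div_cancel_right)
qed

lemma qbinom_sym: "k \<le> n \<Longrightarrow> qbinom n k = qbinom n (n - k)"
  by (simp add: qbinom_def mult.commute)



lemma wt_one:
  assumes "r \<noteq> Leaf"
  shows "wt x y (Node Leaf a r) = y * wt x y r"
proof -
  have "inversions (Node Leaf a r) = inversions r" by (simp add: inversions_Node)
  then show ?thesis using assms by (simp add: wt_def inv_def algebra_simps)
qed

lemma inv_two:
  assumes "set_tree l \<inter> set_tree r = {}" "\<forall>i\<in>set_tree l. a < i" "a \<notin> set_tree r"
  shows "inv (Node l a r) = inv l + inv r + (cross (set_tree l) (set_tree r) + card (set_tree l))"
proof -
  let ?L = "set_tree l" and ?R = "set_tree r"
  let ?X = "{(i, j). j < i \<and> i \<in> ?L \<and> j \<in> ?R}" and ?Y = "{(i, j). j = a \<and> a < i \<and> i \<in> ?L}"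
  have aL: "a \<notin> ?L" using assms(2) by auto
  have sl: "inversions l \<subseteq> ?L \<times> ?L" and sr: "inversions r \<subseteq> ?R \<times> ?R" by (rule inversions_subset)+
  have fX: "finite ?X" by (rule finite_subset[of _ "?L \<times> ?R"]) auto
  have Y: "?Y = (\<lambda>i. (i, a)) ` ?L" using assms(2) by auto
  have fY: "finite ?Y" unfolding Y by simp
  have cY: "card ?Y = card ?L" unfolding Y by (simp add: card_image inj_on_def)
  have cX: "card ?X = cross ?L ?R" unfolding cross_def by (rule arg_cong[where f=card]) auto
  have d1: "inversions l \<inter> inversions r = {}" using sl sr assms(1) by blast
  have d2: "(inversions l \<union> inversions r) \<inter> ?X = {}" using sl sr assms(1) by blast
  have d3: "(inversions l \<union> inversions r \<union> ?X) \<inter> ?Y = {}" using sl sr assms(1,3) aL by blast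
  have "card (inversions l \<union> inversions r \<union> ?X \<union> ?Y) = card (inversions l \<union> inversions r \<union> ?X) + card ?Y"
    by (rule card_Un_disjoint[OF _ fY d3]) (simp add: finite_inversions fX)
  also have "card (inversions l \<union> inversions r \<union> ?X) = card (inversions l \<union> inversions r) + card ?X"
    by (rule card_Un_disjoint[OF _ fX d2]) (simp add: finite_inversions)
  also have "card (inversions l \<union> inversions r) = inv l + inv r"
    unfolding inv_def by (rule card_Un_disjoint[OF finite_inversions finite_inversions d1])
  finally show ?thesis unfolding inv_def inversions_Node using cX cY by simp
qed

lemma wt_two:
  assumes "l \<noteq> Leaf" "r \<noteq> Leaf" "set_tree l \<inter> set_tree r = {}" "\<forall>i\<in>set_tree l. a < i"
    "a \<notin> set_tree r"
  shows "wt x y (Node l a r) = [:0, 1:] ^ (cross (set_tree l) (set_tree r) + card (set_tree l)) * (wt x y l * wt x y r)"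
  using assms inv_two[OF assms(3,4,5)] by (simp add: wt_def power_add algebra_simps)

lemma cross_min:
  assumes "A \<subseteq> C'" "\<forall>i\<in>C'. c < i" "finite C'"
  shows "cross A (insert c (C' - A)) = card A + cross A (C' - A)"
proof -
  have cC: "c \<notin> C'" using assms by auto
  have e: "{(i, j). i \<in> A \<and> j \<in> insert c (C' - A) \<and> j < i} =
    {(i, j). i \<in> A \<and> j \<in> C' - A \<and> j < i} \<union> (\<lambda>i. (i, c)) ` A"
    using assms by auto
  have fA: "finite A" using assms finite_subset by blast
  have "finite {(i, j). i \<in> A \<and> j \<in> C' - A \<and> j < i}"
    by (rule finite_subset[of _ "A \<times> C'"]) (use assms fA in auto)
  moreover have "{(i, j). i \<in> A \<and> j \<in> C' - A \<and> j < i} \<inter> (\<lambda>i. (i, c)) ` A = {}" using cC by auto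
  ultimately have "card ({(i, j). i \<in> A \<and> j \<in> C' - A \<and> j < i} \<union> (\<lambda>i. (i, c)) ` A) =
     card {(i, j). i \<in> A \<and> j \<in> C' - A \<and> j < i} + card ((\<lambda>i. (i, c)) ` A)"
    using fA by (simp add: card_Un_disjoint)
  also have "card ((\<lambda>i. (i, c)) ` A) = card A" by (simp add: card_image inj_on_def)
  finally show ?thesis using e by (simp add: cross_def)
qed

theorem theorem6p15:
  fixes x y :: "'a::field poly" and n :: nat
  assumes "n \<ge> 1"
  shows "E2 (n + 1) x y =
    y * E2 n x y +
    (\<Sum>k<n - 1. [:0, 1:] ^ (2 * (n - k - 1)) * qbinom (n - 1) k * E2 (k + 1) x y * E2 (n - k - 1) x y)"
proof -
  define S where "S = {1..n+1}"
  define U where "U = {2..n+1}"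
  define C where "C = {3..n+1}"
  define Q where "Q A = {(l, r). l \<in> trees_on A \<and> r \<in> trees_on (U - A) \<and>
      ((l \<noteq> Leaf \<or> r \<noteq> Leaf) \<longrightarrow> minlab r < minlab l)}" for A
  define h where "h A = (\<Sum>(l, r)\<in>Q A. wt x y (Node l 1 r))" for A
  have fS: "finite S" and neS: "S \<noteq> {}" by (auto simp: S_def)
  have minS: "Min S = 1" unfolding S_def by (rule Min_eqI) auto
  have SU: "S - {1} = U" by (auto simp: S_def U_def)
  have fU: "finite U" by (simp add: U_def)
  have fC: "finite C" by (simp add: C_def)
  have cU: "card U = n" by (simp add: U_def)
  have cC: "card C = n - 1" by (simp add: C_def)
  have UC: "U = insert 2 C" using assms by (auto simp: U_def C_def)
  have finQ: "finite (Q A)" if "A \<subseteq> U" for A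
  proof -
    have "Q A \<subseteq> trees_on A \<times> trees_on (U - A)" by (auto simp: Q_def)
    moreover have "finite A" using that fU finite_subset by blast
    ultimately show ?thesis using fU by (meson finite_Diff finite_SigmaI finite_subset finite_trees_on)
  qed
  have dec: "trees_on S = (\<lambda>(l, r). Node l 1 r) ` (\<Union>(Q ` Pow U))"
  proof -
    have "{(l,r). \<exists>A \<subseteq> S - {Min S}. l \<in> trees_on A \<and> r \<in> trees_on (S - {Min S} - A) \<and>
      ((l \<noteq> Leaf \<or> r \<noteq> Leaf) \<longrightarrow> minlab r < minlab l)} = \<Union>(Q ` Pow U)"
      unfolding minS SU Q_def by auto
    then show ?thesis using trees_on_decomp[OF fS neS] minS by simp
  qed
  have inj: "inj_on (\<lambda>(l, r). Node l (1::nat) r) X" for X by (auto simp: inj_on_def)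
  have "E2 (n + 1) x y = FF S x y" using E2_FF[of "n+1" x y] by (simp add: S_def)
  also have "\<dots> = (\<Sum>(l, r)\<in>\<Union>(Q ` Pow U). wt x y (Node l 1 r))"
    unfolding FF_def dec sum.reindex[OF inj] by (intro sum.cong) auto
  also have "\<dots> = (\<Sum>A\<in>Pow U. h A)"
    unfolding h_def
  proof (rule sum.UNION_disjoint)
    show "finite (Pow U)" using fU by simp
    show "\<forall>A\<in>Pow U. finite (Q A)" using finQ by auto
    show "\<forall>A\<in>Pow U. \<forall>B\<in>Pow U. A \<noteq> B \<longrightarrow> Q A \<inter> Q B = {}"
      by (auto simp: Q_def trees_on_def)
  qed
  also have "\<dots> = h {} + (\<Sum>A\<in>Pow U - {{}}. h A)"
    using fU by (simp add: sum.remove)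
  also have "h {} = y * E2 n x y"
  proof -
    have ne: "U \<noteq> {}" using assms by (auto simp: U_def)
    have "Q {} = {Leaf} \<times> trees_on U"
      using trees_on_nonempty[OF _ ne] by (auto simp: Q_def trees_on_empty minlab_def)
    then have "h {} = (\<Sum>r\<in>trees_on U. wt x y (Node Leaf 1 r))" by (simp add: h_def sum.cartesian_product[symmetric])
    also have "\<dots> = (\<Sum>r\<in>trees_on U. y * wt x y r)"
    proof (rule sum.cong[OF refl])
      fix r assume "r \<in> trees_on U"
      then show "wt x y (Node Leaf 1 r) = y * wt x y r" by (rule wt_one[OF trees_on_nonempty[OF _ ne]])
    qed
    also have "\<dots> = y * FF U x y" by (simp add: FF_def sum_distrib_left)
    finally show ?thesis using FF_card[OF fU ne, of x y] cU by simp
  qed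
  also have "(\<Sum>A\<in>Pow U - {{}}. h A) = (\<Sum>A\<in>{A. A \<subseteq> C \<and> A \<noteq> {}}. h A)"
  proof (rule sum.mono_neutral_right)
    show "finite (Pow U - {{}})" using fU by simp
    show "{A. A \<subseteq> C \<and> A \<noteq> {}} \<subseteq> Pow U - {{}}" using UC by auto
    show "\<forall>A\<in>Pow U - {{}} - {A. A \<subseteq> C \<and> A \<noteq> {}}. h A = 0"
    proof
      fix A assume A: "A \<in> Pow U - {{}} - {A. A \<subseteq> C \<and> A \<noteq> {}}"
      then have AU: "A \<subseteq> U" and ne: "A \<noteq> {}" and A2: "2 \<in> A" using UC by auto
      have "Q A = {}"
      proof (rule ccontr)
        assume "Q A \<noteq> {}"
        then obtain l r where lr: "l \<in> trees_on A" "r \<in> trees_on (U - A)"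
          "(l \<noteq> Leaf \<or> r \<noteq> Leaf) \<longrightarrow> minlab r < minlab l" by (auto simp: Q_def)
        have fA: "finite A" using AU fU finite_subset by blast
        have "Min A = 2" using A2 AU fA by (intro Min_eqI) (auto simp: U_def)
        then have ml: "minlab l = enat 2" using minlab_trees_on[OF lr(1) ne] by simp
        have lL: "l \<noteq> Leaf" using trees_on_nonempty[OF lr(1) ne] .
        show False
        proof (cases "U - A = {}")
          case True
          then have "r = Leaf" using lr(2) trees_on_empty by (metis singletonD)
          then show False using lr(3) lL ml by (simp add: minlab_def)
        next
          case False
          have "Min (U - A) \<in> U - A" using False fU by (intro Min_in) auto
          then have "Min (U - A) \<ge> 2" by (auto simp: U_def)
          then show False using lr(3) lL ml minlab_trees_on[OF lr(2) False] by simp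
        qed
      qed
      then show "h A = 0" by (simp add: h_def)
    qed
  qed
  also have "(\<Sum>A\<in>{A. A \<subseteq> C \<and> A \<noteq> {}}. h A) =
     (\<Sum>A\<in>{A. A \<subseteq> C \<and> A \<noteq> {}}. [:0, 1:] ^ (2 * card A) * ([:0, 1:] ^ cross A (C - A) * (E2 (card A) x y * E2 (n - card A) x y)))"
  proof (rule sum.cong[OF refl])
    fix A assume A: "A \<in> {A. A \<subseteq> C \<and> A \<noteq> {}}"
    then have AC: "A \<subseteq> C" and ne: "A \<noteq> {}" by auto
    have fA: "finite A" using AC fC finite_subset by blast
    have 2: "2 \<notin> A" using AC by (auto simp: C_def)
    have AU: "A \<subseteq> U" using AC UC by auto
    have UA: "U - A = insert 2 (C - A)" using UC 2 by auto
    have neUA: "U - A \<noteq> {}" using UA by simp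
    have minUA: "Min (U - A) = 2" unfolding UA using fC by (intro Min_eqI) (auto simp: C_def)
    have minA: "Min A \<ge> 3" using ne fA AC by (auto simp: C_def)
    have Q: "Q A = trees_on A \<times> trees_on (U - A)"
      using minlab_trees_on[OF _ ne] minlab_trees_on[OF _ neUA] minUA minA
      by (auto simp: Q_def)
    have cr: "cross A (U - A) = card A + cross A (C - A)"
      unfolding UA by (rule cross_min[OF AC _ fC]) (auto simp: C_def)
    have cUA: "card (U - A) = n - card A" using AU fA cU by (simp add: card_Diff_subset)
    have "h A = (\<Sum>(l, r)\<in>trees_on A \<times> trees_on (U - A).
        [:0, 1:] ^ (cross A (U - A) + card A) * (wt x y l * wt x y r))"
      unfolding h_def Q
    proof (rule sum.cong[OF refl])
      fix p assume p: "p \<in> trees_on A \<times> trees_on (U - A)"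
      obtain l r where lr: "p = (l, r)" by (cases p)
      have l: "l \<in> trees_on A" and r: "r \<in> trees_on (U - A)" using p lr by auto
      have sl: "set_tree l = A" and sr: "set_tree r = U - A" using l r by (auto simp: trees_on_def)
      have "wt x y (Node l 1 r) = [:0, 1:] ^ (cross A (U - A) + card A) * (wt x y l * wt x y r)"
      proof (rule wt_two[of l r 1 x y, unfolded sl sr])
        show "l \<noteq> Leaf" using trees_on_nonempty[OF l ne] .
        show "r \<noteq> Leaf" using trees_on_nonempty[OF r neUA] .
        show "A \<inter> (U - A) = {}" by auto
        show "\<forall>i\<in>A. 1 < i" using AC by (auto simp: C_def)
        show "1 \<notin> U - A" by (auto simp: U_def)
      qed
      then show "(case p of (l, r) \<Rightarrow> wt x y (Node l 1 r)) =
          (case p of (l, r) \<Rightarrow> [:0, 1:] ^ (cross A (U - A) + card A) * (wt x y l * wt x y r))"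
        using lr by simp
    qed
    also have "\<dots> = [:0, 1:] ^ (cross A (U - A) + card A) * (\<Sum>l\<in>trees_on A. \<Sum>r\<in>trees_on (U - A). wt x y l * wt x y r)"
      unfolding sum.cartesian_product[symmetric] by (simp add: sum_distrib_left)
    also have "\<dots> = [:0, 1:] ^ (cross A (U - A) + card A) * (FF A x y * FF (U - A) x y)"
      by (simp add: FF_def sum_product)
    also have "\<dots> = [:0, 1:] ^ (2 * card A) * ([:0, 1:] ^ cross A (C - A) * (E2 (card A) x y * E2 (n - card A) x y))"
      using FF_card[OF fA ne, of x y] FF_card[OF _ neUA, of x y] fU cr cUA by (simp add: power_add algebra_simps mult_2 mult_2_right)
    finally show "h A = [:0, 1:] ^ (2 * card A) * ([:0, 1:] ^ cross A (C - A) * (E2 (card A) x y * E2 (n - card A) x y))" .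
  qed
  also have "\<dots> = (\<Sum>j\<in>{1..n-1}. \<Sum>A\<in>{A \<in> {A. A \<subseteq> C \<and> A \<noteq> {}}. card A = j}.
       [:0, 1:] ^ (2 * card A) * ([:0, 1:] ^ cross A (C - A) * (E2 (card A) x y * E2 (n - card A) x y)))"
  proof (rule sum.group[symmetric])
    show "finite {A. A \<subseteq> C \<and> A \<noteq> {}}" using fC by simp
    show "finite {1..n-1}" by simp
    show "card ` {A. A \<subseteq> C \<and> A \<noteq> {}} \<subseteq> {1..n - 1}"
    proof
      fix j assume "j \<in> card ` {A. A \<subseteq> C \<and> A \<noteq> {}}"
      then obtain A where A: "A \<subseteq> C" "A \<noteq> {}" "j = card A" by auto
      have "finite A" using A fC finite_subset by blast
      then have "1 \<le> card A" using A by (simp add: Suc_leI card_gt_0_iff)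
      moreover have "card A \<le> n - 1" using A fC cC card_mono by metis
      ultimately show "j \<in> {1..n-1}" using A by simp
    qed
  qed
  also have "\<dots> = (\<Sum>j\<in>{1..n-1}. [:0, 1:] ^ (2 * j) * (qbinom (n - 1) (n - 1 - j) * (E2 j x y * E2 (n - j) x y)))"
  proof (rule sum.cong[OF refl])
    fix j assume j: "j \<in> {1..n-1}"
    have e: "{A \<in> {A. A \<subseteq> C \<and> A \<noteq> {}}. card A = j} = {A. A \<subseteq> C \<and> card A = j}"
      using j by auto
    have "qbinom (n - 1) (n - 1 - j) = (qbinom (n - 1) j :: 'a poly)"
      using qbinom_sym[of j "n - 1", where 'a='a] j by simp
    also have "\<dots> = (GG C j :: 'a poly)" using qbinom_GG[OF fC, of j, where 'a='a] j cC by simp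
    finally have qb: "qbinom (n - 1) (n - 1 - j) = (GG C j :: 'a poly)" .
    show "(\<Sum>A\<in>{A \<in> {A. A \<subseteq> C \<and> A \<noteq> {}}. card A = j}.
       [:0, 1:] ^ (2 * card A) * ([:0, 1:] ^ cross A (C - A) * (E2 (card A) x y * E2 (n - card A) x y))) =
      [:0, 1:] ^ (2 * j) * (qbinom (n - 1) (n - 1 - j) * (E2 j x y * E2 (n - j) x y))"
      unfolding e qb GG_def by (simp add: sum_distrib_left sum_distrib_right algebra_simps)
  qed
  also have "\<dots> = (\<Sum>k<n - 1. [:0, 1:] ^ (2 * (n - k - 1)) * qbinom (n - 1) k * E2 (k + 1) x y * E2 (n - k - 1) x y)"
  proof (rule sum.reindex_bij_witness[of _ "\<lambda>k. n - 1 - k" "\<lambda>j. n - 1 - j"])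
    fix k assume k: "k \<in> {..<n - 1}"
    have kn: "k + 1 < n" using k by auto
    show "n - 1 - (n - 1 - k) = k" using kn by simp
    show "n - 1 - k \<in> {1..n - 1}" using kn by auto
  next
    fix j assume j: "j \<in> {1..n - 1}"
    then have j1: "1 \<le> j" "j < n" by auto
    show "n - 1 - (n - 1 - j) = j" using j1 by simp
    show "n - 1 - j \<in> {..<n - 1}" using j1 by auto
    have e1: "n - (n - 1 - j) - 1 = j" using j1 by simp
    have e2: "n - 1 - j + 1 = n - j" using j1 by simp
    show "[:0, 1:] ^ (2 * (n - (n - 1 - j) - 1)) * qbinom (n - 1) (n - 1 - j) * E2 (n - 1 - j + 1) x y * E2 (n - (n - 1 - j) - 1) x y =
      [:0, 1:] ^ (2 * j) * (qbinom (n - 1) (n - 1 - j) * (E2 j x y * E2 (n - j) x y))"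
      unfolding e1 e2 by (simp add: algebra_simps)
  qed
  finally show ?thesis .
qed

end
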